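(* Let $\mathbb{K}\in\{\mathbb{R},\mathbb{C}\}$, $F$ a locally convex topological $\mathbb{K}$-vector space, $E$ a topological $\mathbb{K}$-vector space, $U\subseteq E$ open and $\sigma\in\,]0,1]$. Let $W\subseteq\mathbb{K}$ be an open neighbourhood of $[0,1]$ and $h\colon U\times W\to F$ a $C^{1,\sigma}_{MB}$-map. Suppose that the weak integral $g(x):=\int_0^1h(x,t)\,dt$ exists in $F$ for each $x\in U$ and defines a map $g\colon U\to F$ which is $C^{1,\sigma}_{MB}$. Then the weak integral $\int_0^1 d_1h(x,y,t)\,dt$ exists in $F$ for all $x\in U$ and $y\in E$, and $\int_0^1 d_1h(x,y,t)\,dt=dg(x,y)$, where $d_1h(x,y,t):=d(h(\cdot,t))(x,y)$.
   Context: Vector spaces Hausdorff; usual absolute value on $\mathbb{K}$. Gauge on a topological $\mathbb{K}$-vector space $X$: $q\colon X\to[0,\infty[$ with $q(tx)=|t|q(x)$ and each $\{q<r\}$ a $0$-neighbourhood. A map $\phi$ on a subset $V\subseteq X$ is $C^{0,\sigma}$ if for every $x_0\in V$ and gauge $q$ on the target there exist a gauge $p$ on $X$ and a neighbourhood $V_0$ of $x_0$ in $V$ with $q(\phi(y)-\phi(x))\le p(y-x)^\sigma$ for $x,y\in V_0$. For $\phi$ on an open subset $V$ of $X$: $\phi$ is $C^{1,\sigma}_{MB}$ if $\phi$ is $C^{0,\sigma}$, the directional derivative $d\phi(x,y):=\frac{d}{dt}\big|_{t=0}\phi(x+ty)$ ($t\in\mathbb{K}$) exists for all $x\in V$, $y\in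 X$, and $d\phi\colon V\times X\to F$ is $C^{0,\sigma}$. Here $U\times W$ is open in $E\times\mathbb{K}$. Weak integral: for continuous $\gamma\colon[0,1]\to F$, $z\in F$ is the weak integral $\int_0^1\gamma(t)\,dt$ if $\lambda(z)=\int_0^1\lambda(\gamma(t))\,dt$ for every continuous linear $\lambda\colon F\to\mathbb{K}$. *)

theory Defs
  imports "HOL-Analysis.Analysis"
begin

text \<open>A complete real normed
 field is (isometrically) R or C, with the usual absolute value given by norm.
 A K-vector space is a type with addition, a topology (Hausdorff by the class t2_space)
 and an explicit scalar multiplication sm.\<close>

definition tvs :: "('k::real_normed_field \<Rightarrow> 'a::{ab_group_add,t2_space} \<Rightarrow> 'a) \<Rightarrow> bool" where
  "tvs sm \<longleftrightarrow>
     (\<forall>a x y. sm a (x + y) = sm a x + sm a y) \<and>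
     (\<forall>a b x. sm (a + b) x = sm a x + sm b x) \<and>
     (\<forall>a b x. sm a (sm b x) = sm (a * b) x) \<and>
     (\<forall>x. sm 1 x = x) \<and>
     continuous_on UNIV (\<lambda>p::'a \<times> 'a. fst p + snd p) \<and>
     continuous_on UNIV (\<lambda>p::'k \<times> 'a. sm (fst p) (snd p))"

definition convex_wrt :: "('k::real_normed_field \<Rightarrow> 'a::ab_group_add \<Rightarrow> 'a) \<Rightarrow> 'a set \<Rightarrow> bool" where
  "convex_wrt sm C \<longleftrightarrow>
     (\<forall>x\<in>C. \<forall>y\<in>C. \<forall>t::real\<in>{0..1}. sm (of_real t) x + sm (of_real (1 - t)) y \<in> C)"

definition locally_convex :: "('k::real_normed_field \<Rightarrow> 'a::{ab_group_add,topological_space} \<Rightarrow> 'a) \<Rightarrow> bool" where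
  "locally_convex sm \<longleftrightarrow>
     (\<forall>N. open N \<and> 0 \<in> N \<longrightarrow> (\<exists>C. open C \<and> 0 \<in> C \<and> C \<subseteq> N \<and> convex_wrt sm C))"

definition gauge_on :: "('k::real_normed_field \<Rightarrow> 'a::{ab_group_add,topological_space} \<Rightarrow> 'a) \<Rightarrow> ('a \<Rightarrow> real) \<Rightarrow> bool" where
  "gauge_on sm q \<longleftrightarrow>
     (\<forall>x. 0 \<le> q x) \<and> (\<forall>t x. q (sm t x) = norm t * q x) \<and>
     (\<forall>r>0. \<exists>S. open S \<and> 0 \<in> S \<and> S \<subseteq> {x. q x < r})"

definition C0sigma ::
  "('k::real_normed_field \<Rightarrow> 'a::{ab_group_add,topological_space} \<Rightarrow> 'a) \<Rightarrow>
   ('k \<Rightarrow> 'b::{ab_group_add,topological_space} \<Rightarrow> 'b) \<Rightarrow> real \<Rightarrow> 'a set \<Rightarrow> ('a \<Rightarrow> 'b) \<Rightarrow> bool" where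
  "C0sigma smX smY \<sigma> V \<phi> \<longleftrightarrow>
     (\<forall>x0\<in>V. \<forall>q. gauge_on smY q \<longrightarrow>
        (\<exists>p N. gauge_on smX p \<and> open N \<and> x0 \<in> N \<and>
           (\<forall>x\<in>N \<inter> V. \<forall>y\<in>N \<inter> V. q (\<phi> y - \<phi> x) \<le> p (y - x) powr \<sigma>)))"

definition has_dir_deriv ::
  "('k::real_normed_field \<Rightarrow> 'a::{ab_group_add,topological_space} \<Rightarrow> 'a) \<Rightarrow>
   ('k \<Rightarrow> 'b::{ab_group_add,topological_space} \<Rightarrow> 'b) \<Rightarrow> ('a \<Rightarrow> 'b) \<Rightarrow> 'a \<Rightarrow> 'a \<Rightarrow> 'b \<Rightarrow> bool" where
  "has_dir_deriv smX smY \<phi> x y v \<longleftrightarrow>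
     ((\<lambda>t. smY (inverse t) (\<phi> (x + smX t y) - \<phi> x)) \<longlongrightarrow> v) (at 0)"

definition dd ::
  "('k::real_normed_field \<Rightarrow> 'a::{ab_group_add,topological_space} \<Rightarrow> 'a) \<Rightarrow>
   ('k \<Rightarrow> 'b::{ab_group_add,topological_space} \<Rightarrow> 'b) \<Rightarrow> ('a \<Rightarrow> 'b) \<Rightarrow> 'a \<Rightarrow> 'a \<Rightarrow> 'b" where
  "dd smX smY \<phi> x y = (THE v. has_dir_deriv smX smY \<phi> x y v)"

definition sm_prod :: "('k \<Rightarrow> 'a \<Rightarrow> 'a) \<Rightarrow> ('k \<Rightarrow> 'b \<Rightarrow> 'b) \<Rightarrow> 'k \<Rightarrow> 'a \<times> 'b \<Rightarrow> 'a \<times> 'b" where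
  "sm_prod sm1 sm2 t p = (sm1 t (fst p), sm2 t (snd p))"

definition C1sigmaMB ::
  "('k::real_normed_field \<Rightarrow> 'a::{ab_group_add,topological_space} \<Rightarrow> 'a) \<Rightarrow>
   ('k \<Rightarrow> 'b::{ab_group_add,topological_space} \<Rightarrow> 'b) \<Rightarrow> real \<Rightarrow> 'a set \<Rightarrow> ('a \<Rightarrow> 'b) \<Rightarrow> bool" where
  "C1sigmaMB smX smY \<sigma> V \<phi> \<longleftrightarrow>
     C0sigma smX smY \<sigma> V \<phi> \<and>
     (\<forall>x\<in>V. \<forall>y. \<exists>v. has_dir_deriv smX smY \<phi> x y v) \<and>
     C0sigma (sm_prod smX smX) smY \<sigma> (V \<times> UNIV) (\<lambda>p. dd smX smY \<phi> (fst p) (snd p))"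

definition cont_linear_functional ::
  "('k::real_normed_field \<Rightarrow> 'a::{ab_group_add,topological_space} \<Rightarrow> 'a) \<Rightarrow> ('a \<Rightarrow> 'k) \<Rightarrow> bool" where
  "cont_linear_functional sm lam \<longleftrightarrow>
     (\<forall>x y. lam (x + y) = lam x + lam y) \<and> (\<forall>t x. lam (sm t x) = t * lam x) \<and>
     continuous_on UNIV lam"

definition weak_integral ::
  "('k::{real_normed_field,banach} \<Rightarrow> 'a::{ab_group_add,topological_space} \<Rightarrow> 'a) \<Rightarrow> (real \<Rightarrow> 'a) \<Rightarrow> 'a \<Rightarrow> bool" where
  "weak_integral sm \<gamma> z \<longleftrightarrow>
     (\<forall>lam. cont_linear_functional sm lam \<longrightarrow> ((\<lambda>t. lam (\<gamma> t)) has_integral lam z) {0..1})"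

end

theory Submission
  imports Defs
begin

lemma tvs_zero: assumes "tvs sm" shows "sm 0 x = 0"
proof -
  have "sm (0+0) x = sm 0 x + sm 0 x" using assms unfolding tvs_def by blast
  then show ?thesis by simp
qed

lemma tvs_add: assumes "tvs sm" shows "sm a x + sm b x = sm (a+b) x"
  using assms unfolding tvs_def by metis

lemma tvs_diff: assumes "tvs sm" shows "sm a x - sm b x = sm (a-b) x"
proof -
  have "sm (a-b) x + sm b x = sm a x" using tvs_add[OF assms, of "a-b" x b] by simp
  then show ?thesis by (metis add_diff_cancel)
qed

lemma tvs_cont_scal: fixes sm :: "'k::real_normed_field \<Rightarrow> 'a::{ab_group_add,t2_space} \<Rightarrow> 'a" assumes "tvs sm"
  shows "continuous_on UNIV (\<lambda>r::real. sm (of_real r) y)"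
proof -
  have c: "continuous_on UNIV (\<lambda>p::'k \<times> 'a. sm (fst p) (snd p))" using assms unfolding tvs_def by blast
  have "continuous_on UNIV (\<lambda>r::real. (of_real r :: 'k, y))" by (intro continuous_intros)
  from continuous_on_compose2[OF c this] show ?thesis by simp
qed

lemma tvs_cont_add: fixes sm :: "'k::real_normed_field \<Rightarrow> 'a::{ab_group_add,t2_space} \<Rightarrow> 'a" and x :: 'a assumes "tvs sm" and "continuous_on S f"
  shows "continuous_on S (\<lambda>r. x + f r)"
proof -
  have c: "continuous_on UNIV (\<lambda>p::'a \<times> 'a. fst p + snd p)" using assms unfolding tvs_def by blast
  have "continuous_on S (\<lambda>r. (x, f r))" using assms(2) by (intro continuous_intros)
  from continuous_on_compose2[OF c this] show ?thesis by simp
qed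

lemma clf_zero: "cont_linear_functional sm lam \<Longrightarrow> lam 0 = 0"
  unfolding cont_linear_functional_def by (metis add_cancel_left_left add_0)

lemma clf_diff: "cont_linear_functional sm lam \<Longrightarrow> lam (a - b) = lam a - lam b"
  unfolding cont_linear_functional_def by (metis add_diff_cancel diff_add_cancel)

lemma clf_gauge: assumes "cont_linear_functional sm lam"
  shows "gauge_on sm (\<lambda>z. norm (lam z))"
  unfolding gauge_on_def
proof (intro conjI allI impI)
  fix t x show "norm (lam (sm t x)) = norm t * norm (lam x)"
    using assms unfolding cont_linear_functional_def by (simp add: norm_mult)
next
  fix r :: real assume "r > 0"
  have "open (lam -` ball 0 r)"
    using assms unfolding cont_linear_functional_def by (intro open_vimage) auto
  moreover have "0 \<in> lam -` ball 0 r" using clf_zero[OF assms] \<open>r>0\<close> by simp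
  moreover have "lam -` ball 0 r \<subseteq> {x. norm (lam x) < r}" by auto
  ultimately show "\<exists>S. open S \<and> 0 \<in> S \<and> S \<subseteq> {x. norm (lam x) < r}" by blast
qed auto

lemma clf_isCont: "cont_linear_functional sm lam \<Longrightarrow> isCont lam z"
  unfolding cont_linear_functional_def by (simp add: continuous_on_eq_continuous_at)

lemma dir_deriv_unique:
  fixes smY :: "'k::real_normed_field \<Rightarrow> 'b::{ab_group_add,t2_space} \<Rightarrow> 'b"
  assumes "has_dir_deriv smX smY \<phi> x y v" "has_dir_deriv smX smY \<phi> x y w"
  shows "v = w"
  using assms unfolding has_dir_deriv_def by (intro tendsto_unique[OF at_neq_bot]) auto

lemma dd_eq:
  fixes smY :: "'k::real_normed_field \<Rightarrow> 'b::{ab_group_add,t2_space} \<Rightarrow> 'b"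
  assumes "has_dir_deriv smX smY \<phi> x y v"
  shows "dd smX smY \<phi> x y = v"
  unfolding dd_def using assms dir_deriv_unique by blast

lemma dd_partial:
  "dd smE smF (\<lambda>z. h (z, t)) x y = dd (sm_prod smE (*)) smF h (x, t) (y, 0)"
  unfolding dd_def has_dir_deriv_def sm_prod_def by simp


lemma filterlim_of_real_at0: "filterlim (of_real :: real \<Rightarrow> 'k::real_normed_algebra_1) (at 0) (at 0)"
proof -
  have "((of_real :: real \<Rightarrow> 'k) \<longlongrightarrow> of_real 0) (at 0)"
    by (intro tendsto_of_real tendsto_ident_at)
  moreover have "\<forall>\<^sub>F u in at (0::real). (of_real u :: 'k) \<in> UNIV \<and> of_real u \<noteq> 0"
    by (simp add: eventually_at_filter)
  ultimately show ?thesis by (simp add: filterlim_at)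
qed

lemma dir_deriv_real:
  fixes smY :: "'k::{real_normed_field,banach} \<Rightarrow> 'b::{ab_group_add,t2_space} \<Rightarrow> 'b"
  assumes "has_dir_deriv smX smY \<phi> x y v" "cont_linear_functional smY lam"
  shows "((\<lambda>u::real. inverse (of_real u) * (lam (\<phi> (x + smX (of_real u) y)) - lam (\<phi> x))) \<longlongrightarrow> lam v) (at 0)"
proof -
  have "((\<lambda>t. smY (inverse t) (\<phi> (x + smX t y) - \<phi> x)) \<longlongrightarrow> v) (at 0)"
    using assms(1) unfolding has_dir_deriv_def .
  from isCont_tendsto_compose[OF clf_isCont[OF assms(2)] this]
  have "((\<lambda>t. inverse t * (lam (\<phi> (x + smX t y)) - lam (\<phi> x))) \<longlongrightarrow> lam v) (at 0)"
    using assms(2) clf_diff[OF assms(2)] unfolding cont_linear_functional_def by simp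
  from filterlim_compose[OF this filterlim_of_real_at0] show ?thesis by (simp add: o_def)
qed

lemma vd_from_quotient:
  fixes f :: "real \<Rightarrow> 'k::real_normed_field"
  assumes "((\<lambda>u. inverse (of_real u) * (f (r + u) - f r)) \<longlongrightarrow> L) (at 0)"
  shows "(f has_vector_derivative L) (at r)"
proof -
  have "((\<lambda>u. norm (inverse (of_real u) * (f (r + u) - f r) - L)) \<longlongrightarrow> 0) (at 0)"
    using tendsto_norm_zero[OF LIM_zero[OF assms]] .
  moreover have "\<forall>\<^sub>F u in at (0::real). norm (inverse (of_real u) * (f (r + u) - f r) - L)
      = norm (f (r + u) - f r - u *\<^sub>R L) / norm u"
  proof -
    have "norm (inverse (of_real u) * (f (r + u) - f r) - L) = norm (f (r + u) - f r - u *\<^sub>R L) / norm u"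
      if "u \<noteq> 0" for u
    proof -
      have "inverse (of_real u) * (f (r + u) - f r) - L = inverse (of_real u) * (f (r + u) - f r - of_real u * L)"
        using that by (simp add: field_simps)
      then show ?thesis by (simp add: norm_mult norm_inverse scaleR_conv_of_real divide_inverse mult.commute)
    qed
    then show ?thesis by (simp add: eventually_at_filter)
  qed
  ultimately have "((\<lambda>u. norm (f (r + u) - f r - u *\<^sub>R L) / norm u) \<longlongrightarrow> 0) (at 0)"
    using Lim_transform_eventually by fastforce
  then show ?thesis
    unfolding has_vector_derivative_def has_derivative_at
    by (simp add: bounded_linear_scaleR_left)
qed


theorem lemmaC6:
  fixes smE :: "'k::{real_normed_field,banach} \<Rightarrow> 'e::{ab_group_add,t2_space} \<Rightarrow> 'e"
    and smF :: "'k \<Rightarrow> 'f::{ab_group_add,t2_space} \<Rightarrow> 'f"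
    and U :: "'e set" and W :: "'k set" and \<sigma> :: real
    and h :: "'e \<times> 'k \<Rightarrow> 'f" and g :: "'e \<Rightarrow> 'f"
  assumes "tvs smE" and "tvs smF" and "locally_convex smF"
    and "open U" and "0 < \<sigma>" and "\<sigma> \<le> 1"
    and "open W" and "of_real ` {0..1::real} \<subseteq> W"
    and "C1sigmaMB (sm_prod smE (*)) smF \<sigma> (U \<times> W) h"
    and "\<forall>x\<in>U. weak_integral smF (\<lambda>t. h (x, of_real t)) (g x)"
    and "C1sigmaMB smE smF \<sigma> U g"
  shows "\<forall>x\<in>U. \<forall>y. weak_integral smF (\<lambda>t. dd smE smF (\<lambda>z. h (z, of_real t)) x y) (dd smE smF g x y)"
proof (intro ballI allI)
  fix x y assume xU: "x \<in> U"
  note tE = assms(1)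
  show "weak_integral smF (\<lambda>t. dd smE smF (\<lambda>z. h (z, of_real t)) x y) (dd smE smF g x y)"
    unfolding weak_integral_def
  proof (intro allI impI)
    fix lam assume lam: "cont_linear_functional smF lam"
    define P where "P r t = (x + smE (of_real r) y, of_real t :: 'k)" for r t :: real
    define dh where "dh = (\<lambda>p. dd (sm_prod smE (*)) smF h (fst p) (snd p))"
    define G where "G z = lam (dh (P (fst z) (snd z), (y, 0::'k)))" for z :: "real \<times> real"
    define f where "f t r = lam (h (P r t))" for t r :: real
    have P0: "P 0 t = (x, of_real t)" for t using tvs_zero[OF tE] by (simp add: P_def)
    have contL: "continuous_on UNIV (\<lambda>r::real. x + smE (of_real r) y)"
      by (intro tvs_cont_add[OF tE] tvs_cont_scal[OF tE])
    obtain \<delta>0 where d0: "\<delta>0 > 0" "\<And>r. \<bar>r\<bar> \<le> \<delta>0 \<Longrightarrow> x + smE (of_real r) y \<in> U"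
    proof -
      have "open ((\<lambda>r::real. x + smE (of_real r) y) -` U)"
        using open_vimage[OF assms(4) contL] .
      moreover have "0 \<in> (\<lambda>r::real. x + smE (of_real r) y) -` U" using xU tvs_zero[OF tE] by simp
      ultimately obtain e where "e > 0" "ball 0 e \<subseteq> (\<lambda>r::real. x + smE (of_real r) y) -` U"
        using open_contains_ball by blast
      moreover have "x + smE (of_real r) y \<in> U" if "\<bar>r\<bar> \<le> e/2" for r
        using \<open>e > 0\<close> that subsetD[OF \<open>ball 0 e \<subseteq> _\<close>, of r] by (simp add: dist_real_def)
      ultimately show ?thesis using that[of "e/2"] by simp
    qed
    define K where "K = {-\<delta>0..\<delta>0} \<times> {0..1::real}"
    have PUW: "P r t \<in> U \<times> W" if "\<bar>r\<bar> \<le> \<delta>0" "t \<in> {0..1}" for r t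
    proof -
      have "of_real t \<in> W" using assms(8) that(2) by blast
      then show ?thesis using d0(2)[OF that(1)] by (simp add: P_def)
    qed
    have contG: "continuous_on K G"
      unfolding continuous_on_iff
    proof (intro ballI allI impI)
      fix z e assume zK: "z \<in> K" and e: "(0::real) < e"
      obtain r0 t0 where z: "z = (r0, t0)" by (cases z)
      have r0: "\<bar>r0\<bar> \<le> \<delta>0" and t0: "t0 \<in> {0..1}" using zK z by (auto simp: K_def)
      define a0 where "a0 = (P r0 t0, (y, 0::'k))"
      define V where "V = (U \<times> W) \<times> (UNIV :: ('e \<times> 'k) set)"
      have a0V: "a0 \<in> V" using PUW[OF r0 t0] by (simp add: a0_def V_def)
      have gq: "gauge_on smF (\<lambda>w. norm (lam w))" using clf_gauge[OF lam] .
      have C0: "C0sigma (sm_prod (sm_prod smE (*)) (sm_prod smE (*))) smF \<sigma> V dh"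
        using assms(9) unfolding C1sigmaMB_def dh_def V_def by (elim conjE)
      obtain p N where p: "gauge_on (sm_prod (sm_prod smE (*)) (sm_prod smE (*))) p" and N: "open N" "a0 \<in> N"
        and pN: "\<And>b b'. b \<in> N \<inter> V \<Longrightarrow> b' \<in> N \<inter> V \<Longrightarrow> norm (lam (dh b' - dh b)) \<le> p (b' - b) powr \<sigma>"
        using C0 a0V gq unfolding C0sigma_def by meson
      define \<eta> where "\<eta> = e powr (1/\<sigma>)"
      have eta: "\<eta> > 0" using e by (simp add: \<eta>_def)
      obtain S where S: "open S" "0 \<in> S" "S \<subseteq> {w. p w < \<eta>}" and pnn: "\<And>w. 0 \<le> p w"
        using p eta unfolding gauge_on_def by meson
      define Bf where "Bf w = (P (fst w) (snd w), (y, 0::'k))" for w :: "real \<times> real"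
      define Bd where "Bd w = ((smE (of_real (fst w - r0)) y, of_real (snd w - t0) :: 'k), (0::'e, 0::'k))"
        for w :: "real \<times> real"
      have Bdiff: "Bf w - a0 = Bd w" for w
        by (simp add: Bf_def Bd_def a0_def P_def prod_eq_iff tvs_diff[OF tE])
      have cBf: "continuous_on UNIV Bf"
      proof -
        have "continuous_on UNIV (\<lambda>w::real\<times>real. x + smE (of_real (fst w)) y)"
          using continuous_on_compose2[OF contL continuous_on_fst[OF continuous_on_id]] by simp
        then show ?thesis unfolding Bf_def P_def by (intro continuous_intros) auto
      qed
      have cBd: "continuous_on UNIV Bd"
      proof -
        have "continuous_on UNIV (\<lambda>w::real\<times>real. fst w - r0)" by (intro continuous_intros)
        then have "continuous_on UNIV (\<lambda>w::real\<times>real. smE (of_real (fst w - r0)) y)"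
          using continuous_on_compose2[OF tvs_cont_scal[OF tE]] by blast
        then show ?thesis unfolding Bd_def by (intro continuous_intros) auto
      qed
      have Bf0: "Bf (r0, t0) = a0" by (simp add: Bf_def a0_def)
      have Bd0: "Bd (r0, t0) = 0" by (simp add: Bd_def tvs_zero[OF tE] zero_prod_def)
      define Oo where "Oo = Bf -` N \<inter> Bd -` S"
      have "open Oo" unfolding Oo_def using open_vimage[OF N(1) cBf] open_vimage[OF S(1) cBd] by blast
      moreover have "z \<in> Oo" using Bf0 Bd0 N(2) S(2) z by (simp add: Oo_def)
      ultimately obtain d where d: "d > 0" "ball z d \<subseteq> Oo" using open_contains_ball by blast
      have "dist (G z') (G z) < e" if z'K: "z' \<in> K" and dz: "dist z' z < d" for z'
      proof -
        have "z' \<in> Oo" using d(2) dz by (auto simp: dist_commute)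
        then have inN: "Bf z' \<in> N" and inS: "p (Bd z') < \<eta>" using S(3) by (auto simp: Oo_def)
        have "\<bar>fst z'\<bar> \<le> \<delta>0" "snd z' \<in> {0..1}" using z'K by (auto simp: K_def)
        then have "Bf z' \<in> V" using PUW by (simp add: Bf_def V_def)
        then have "norm (lam (dh (Bf z') - dh a0)) \<le> p (Bf z' - a0) powr \<sigma>"
          using pN inN N(2) a0V by blast
        also have "\<dots> = p (Bd z') powr \<sigma>" by (simp add: Bdiff)
        also have "\<dots> < \<eta> powr \<sigma>" using powr_less_mono2[OF assms(5) pnn inS] .
        also have "\<eta> powr \<sigma> = e" using e assms(5) by (simp add: \<eta>_def powr_powr)
        finally have "norm (lam (dh (Bf z') - dh a0)) < e" .
        moreover have "G z' = lam (dh (Bf z'))" by (simp add: G_def Bf_def)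
        moreover have "G z = lam (dh a0)" by (simp add: G_def a0_def z)
        ultimately show ?thesis by (simp add: dist_norm clf_diff[OF lam])
      qed
      then show "\<exists>d>0. \<forall>z'\<in>K. dist z' z < d \<longrightarrow> dist (G z') (G z) < e" using d(1) by blast
    qed
    have ucG: "uniformly_continuous_on K G"
    proof -
      have "compact K" unfolding K_def by (intro compact_Times compact_Icc)
      then show ?thesis using compact_uniformly_continuous[OF contG] by blast
    qed
    have deriv: "((f t) has_vector_derivative G (r, t)) (at r)" if rt: "\<bar>r\<bar> \<le> \<delta>0" "t \<in> {0..1}" for r t
    proof -
      obtain v where v: "has_dir_deriv (sm_prod smE (*)) smF h (P r t) (y, 0) v"
      proof -
        have "\<forall>p\<in>U \<times> W. \<forall>d. \<exists>v. has_dir_deriv (sm_prod smE (*)) smF h p d v"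
          using assms(9) unfolding C1sigmaMB_def by (elim conjE)
        then show ?thesis using PUW[OF rt] that by meson
      qed
      have "G (r, t) = lam v" using dd_eq[OF v] by (simp add: G_def dh_def)
      moreover have eq: "P r t + sm_prod smE (*) (of_real u) (y, 0) = P (r + u) t" for u
        by (simp add: P_def sm_prod_def add.assoc tvs_add[OF tE])
      ultimately show ?thesis
        apply (intro vd_from_quotient)
        using dir_deriv_real[OF v lam] by (simp only: eq f_def)
    qed
    have est: "\<exists>d>0. \<forall>s. s \<noteq> 0 \<and> \<bar>s\<bar> < d \<longrightarrow> (\<forall>t\<in>{0..1}.
        norm (inverse (of_real s) * (f t s - f t 0) - G (0, t)) \<le> e)" if e: "e > 0" for e
    proof -
      obtain d1 where d1: "d1 > 0" "\<And>p p'. p \<in> K \<Longrightarrow> p' \<in> K \<Longrightarrow> dist p' p < d1 \<Longrightarrow> dist (G p') (G p) < e"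
        using ucG e unfolding uniformly_continuous_on_def by metis
      have "\<forall>s. s \<noteq> 0 \<and> \<bar>s\<bar> < min d1 \<delta>0 \<longrightarrow> (\<forall>t\<in>{0..1}.
        norm (inverse (of_real s) * (f t s - f t 0) - G (0, t)) \<le> e)"
      proof (intro allI impI ballI)
        fix s t assume s: "s \<noteq> 0 \<and> \<bar>s\<bar> < min d1 \<delta>0" and t: "t \<in> {0..1::real}"
        define S where "S = closed_segment 0 s"
        have rS: "\<bar>r\<bar> \<le> \<bar>s\<bar>" if "r \<in> S" for r
          using that by (auto simp: S_def closed_segment_eq_real_ivl split: if_splits)
        have der: "(f t has_vector_derivative G (r, t)) (at r within S)" if "r \<in> S" for r
        proof -
          have "\<bar>r\<bar> \<le> \<delta>0" using rS[OF that] s by linarith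
          from has_vector_derivative_at_within[OF deriv[OF this t]] show ?thesis .
        qed
        have bnd: "norm (G (r, t) - G (0, t)) \<le> e" if "r \<in> S" for r
        proof -
          have "(r, t) \<in> K" "(0, t) \<in> K" using rS[OF that] s t d0(1) by (auto simp: K_def)
          moreover have "dist (r, t) (0, t) < d1" using rS[OF that] s by (simp add: dist_Pair_Pair)
          ultimately show ?thesis using d1(2) by (fastforce simp: dist_norm)
        qed
        have "0 \<in> S" by (simp add: S_def)
        from vector_differentiable_bound_linearization[where f="f t" and f'="\<lambda>r. G (r, t)" and S=S
            and a=0 and b=s and B=e, OF der _ bnd this]
        have "norm (f t s - f t 0 - s *\<^sub>R G (0, t)) \<le> \<bar>s\<bar> * e" by (simp add: S_def)
        then have X: "norm (f t s - f t 0 - of_real s * G (0, t)) \<le> e * \<bar>s\<bar>"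
          by (simp add: scaleR_conv_of_real mult.commute)
        have "inverse (of_real s) * (f t s - f t 0) - G (0, t)
            = inverse (of_real s) * (f t s - f t 0 - of_real s * G (0, t))"
          using s by (simp add: field_simps)
        also have "norm \<dots> = norm (f t s - f t 0 - of_real s * G (0, t)) / \<bar>s\<bar>"
          by (simp add: norm_mult norm_inverse divide_inverse mult.commute)
        finally show "norm (inverse (of_real s) * (f t s - f t 0) - G (0, t)) \<le> e"
          using X s by (simp add: pos_divide_le_eq)
      qed
      then show ?thesis using d1(1) d0(1) by (intro exI[of _ "min d1 \<delta>0"]) simp
    qed
    define c where "c t = G (0, t)" for t
    have contc: "continuous_on {0..1} c"
    proof -
      have "continuous_on {0..1} (\<lambda>t::real. (0::real, t))" by (intro continuous_intros)
      moreover have "(\<lambda>t::real. (0::real, t)) ` {0..1} \<subseteq> K" using d0(1) by (auto simp: K_def)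
      ultimately show ?thesis using continuous_on_compose2[OF contG] unfolding c_def by blast
    qed
    define Ic where "Ic = integral {0..1} c"
    have cI: "(c has_integral Ic) {0..1}"
      using integrable_continuous_real[OF contc] unfolding Ic_def by (rule integrable_integral)
    define Q where "Q s = inverse (of_real s) * (lam (g (x + smE (of_real s) y)) - lam (g x))" for s :: real
    have hI: "((\<lambda>t. f t s) has_integral lam (g (x + smE (of_real s) y))) {0..1}" if "\<bar>s\<bar> \<le> \<delta>0" for s
    proof -
      have "weak_integral smF (\<lambda>t. h (x + smE (of_real s) y, of_real t)) (g (x + smE (of_real s) y))"
        using assms(10) d0(2)[OF that] by blast
      then have "((\<lambda>t. lam (h (x + smE (of_real s) y, of_real t))) has_integral lam (g (x + smE (of_real s) y))) {0..1}"
        using lam unfolding weak_integral_def by blast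
      then show ?thesis unfolding f_def P_def .
    qed
    have QI: "((\<lambda>t. inverse (of_real s) * (f t s - f t 0)) has_integral Q s) {0..1}" if "\<bar>s\<bar> \<le> \<delta>0" for s
      using has_integral_mult_right[OF has_integral_diff[OF hI[OF that] hI[of 0]], of "inverse (of_real s)"] d0(1) tvs_zero[OF tE]
      by (simp add: Q_def)
    have limQ: "(Q \<longlongrightarrow> Ic) (at 0)"
      unfolding LIM_eq
    proof (intro allI impI)
      fix r :: real assume r: "r > 0"
      obtain d where d: "d > 0" "\<And>s t. s \<noteq> 0 \<Longrightarrow> \<bar>s\<bar> < d \<Longrightarrow> t \<in> {0..1} \<Longrightarrow>
          norm (inverse (of_real s) * (f t s - f t 0) - G (0, t)) \<le> r/2"
        using est[of "r/2"] r by auto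
      have "norm (Q s - Ic) < r" if s: "s \<noteq> 0 \<and> norm (s - 0) < min d \<delta>0" for s
      proof -
        have "((\<lambda>t. inverse (of_real s) * (f t s - f t 0) - c t) has_integral (Q s - Ic)) (cbox 0 1)"
          using has_integral_diff[OF QI cI] s by simp
        from has_integral_bound[OF _ this, of "r/2"] have "norm (Q s - Ic) \<le> r/2"
          using d(2)[of s] s r by (simp add: c_def)
        then show ?thesis using r by simp
      qed
      then show "\<exists>s>0. \<forall>x. x \<noteq> 0 \<and> norm (x - 0) < s \<longrightarrow> norm (Q x - Ic) < r"
        using d(1) d0(1) by (intro exI[of _ "min d \<delta>0"]) simp
    qed
    obtain v where v: "has_dir_deriv smE smF g x y v"
    proof -
      have "\<forall>p\<in>U. \<forall>d. \<exists>v. has_dir_deriv smE smF g p d v"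
        using assms(11) unfolding C1sigmaMB_def by (elim conjE)
      then show ?thesis using xU that by meson
    qed
    have "(Q \<longlongrightarrow> lam v) (at 0)"
    proof -
      have "Q = (\<lambda>u. inverse (of_real u) * (lam (g (x + smE (of_real u) y)) - lam (g x)))"
        by (rule ext) (simp only: Q_def)
      then show ?thesis using dir_deriv_real[OF v lam] by simp
    qed
    then have "lam v = Ic" using limQ by (intro tendsto_unique[OF at_neq_bot])
    moreover have "lam (dd smE smF (\<lambda>z. h (z, of_real t)) x y) = c t" for t
      by (simp add: c_def G_def dh_def dd_partial P0)
    ultimately show "((\<lambda>t. lam (dd smE smF (\<lambda>z. h (z, of_real t)) x y)) has_integral lam (dd smE smF g x y)) {0..1}"
      using cI dd_eq[OF v] by simp
  qed
qed

end
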